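(* If a spherical curve $P$ has a trigon of type C, then $r(P)\le 3$.
   Context: A spherical curve is a smooth immersion $P:S^1\to S^2$ whose self-intersections are finitely many transverse double points, called crossings. It is oriented and has at least one crossing. Regions are the components of $S^2\setminus P(S^1)$, and edges are the arcs of the curve between consecutive crossings. A trigon is a region bounded by three edges. The Gauss word is the cyclic word of crossings met in one traversal of the curve; each crossing appears twice. Crossings $a,b$ are interlaced if their occurrences alternate $a\dots b\dots a\dots b$ in the cyclic word, i.e., their chords cross in the chord diagram. Let a trigon have crossings $x,y,z$. Each of its three edges gives a block of two consecutive letters in the Gauss word, one block on each of $\{x,y\}$, $\{y,z\}$, $\{z,x\}$, so the word has the form $B_1W_1B_2W_2B_3W_3$ with the $W_i$ free of $x,y,z$. The trigon's type is determined by how many of the three pairs among $x,y,z$ are interlaced: type A if exactly two pairs are interlaced; type B if exactly one; type C if all three (e.g. $xy\,W_1\,zx\,W_2\,yz\,W_3$, as in the trefoil curve); type D if none (e.g. $xy\,W_1\,yz\,W_2\,zx\,W_3$). A crossing is reducible if no crossing is interlaced with it; equivalently, only three distinct regions meet at it. $P$ is reducible if it has a reducible crossing. The inverse-half-twisted splice $I$ at a crossing $p$ takes the curve with cyclic Gauss word $p\,A\,p\,B$ to the curve with Gauss word $\overline{A}\,B$, where $\overline{A}$ is $A$ reversed. Geometrically, $p$ is smoothed in the unique way giving a single closed curve, and the result is re-oriented. The reductivity $r(P)$ is the minimal number of successive applications of $I$ needed to reach a reducible spherical curve; $r(P)=0$ if $P$ is reducible. *)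

theory Defs
  imports Main
begin

(* A spherical curve with n \<ge> 1 crossings is encoded combinatorially (up to
   homeomorphism of S^2) by its Gauss word w (a list, read cyclically, of length
   m = 2n, each crossing occurring exactly twice) together with the rotation
   system of the underlying 4-valent plane graph.
   Edge e (e < m) runs from position e to position (e+1) mod m of the word.
   Darts (edge-ends): (e, True) = start of edge e (at position e),
                      (e, False) = end of edge e (at position (e+1) mod m). *)

type_synonym dart = "nat \<times> bool"

definition gauss_word :: "'a list \<Rightarrow> bool" where
  "gauss_word w \<longleftrightarrow> w \<noteq> [] \<and> (\<forall>c \<in> set w. count_list w c = 2)"

definition darts :: "'a list \<Rightarrow> dart set" where
  "darts w = {(e, b). e < length w}"

fun dpos :: "'a list \<Rightarrow> dart \<Rightarrow> nat" where
  "dpos w (e, True) = e"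
| "dpos w (e, False) = Suc e mod length w"

definition vert :: "'a list \<Rightarrow> dart \<Rightarrow> 'a" where
  "vert w d = w ! dpos w d"

fun alpha :: "dart \<Rightarrow> dart" where
  "alpha (e, b) = (e, \<not> b)"

definition in_dart :: "'a list \<Rightarrow> nat \<Rightarrow> dart" where
  "in_dart w p = ((p + length w - 1) mod length w, False)"

definition out_dart :: "nat \<Rightarrow> dart" where
  "out_dart p = (p, True)"

(* rot is a (counterclockwise) rotation system: it cyclically permutes the four
   darts at each crossing, and the curve passes straight (transversally) through
   each crossing, i.e. the incoming and outgoing darts of the same pass are
   opposite in the cyclic order (rot^2 swaps them). *)
definition admissible_rotation :: "'a list \<Rightarrow> (dart \<Rightarrow> dart) \<Rightarrow> bool" where
  "admissible_rotation w rot \<longleftrightarrow>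
     (\<forall>d \<in> darts w. rot d \<in> darts w \<and> vert w (rot d) = vert w d) \<and>
     (\<forall>p < length w. rot (rot (in_dart w p)) = out_dart p \<and>
                      rot (rot (out_dart p)) = in_dart w p)"

definition face_perm :: "(dart \<Rightarrow> dart) \<Rightarrow> dart \<Rightarrow> dart" where
  "face_perm rot = rot \<circ> alpha"

definition regions :: "'a list \<Rightarrow> (dart \<Rightarrow> dart) \<Rightarrow> dart set set" where
  "regions w rot = {{(face_perm rot ^^ k) d | k. True} | d. d \<in> darts w}"

(* the map is drawn on the sphere: Euler's formula V - E + F = 2
   with V = n, E = 2n, i.e. F = n + 2 *)
definition spherical_curve :: "'a list \<Rightarrow> (dart \<Rightarrow> dart) \<Rightarrow> bool" where
  "spherical_curve w rot \<longleftrightarrow>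
     gauss_word w \<and> admissible_rotation w rot \<and>
     card (regions w rot) = card (set w) + 2"

definition interlaced :: "'a list \<Rightarrow> 'a \<Rightarrow> 'a \<Rightarrow> bool" where
  "interlaced w a b \<longleftrightarrow> a \<noteq> b \<and>
     (\<exists>p1 p2 p3 p4. p1 < p2 \<and> p2 < p3 \<and> p3 < p4 \<and> p4 < length w \<and>
        ((w!p1 = a \<and> w!p2 = b \<and> w!p3 = a \<and> w!p4 = b) \<or>
         (w!p1 = b \<and> w!p2 = a \<and> w!p3 = b \<and> w!p4 = a)))"

definition trigon_at :: "'a list \<Rightarrow> (dart \<Rightarrow> dart) \<Rightarrow> dart \<Rightarrow> 'a \<Rightarrow> 'a \<Rightarrow> 'a \<Rightarrow> bool" where
  "trigon_at w rot d x y z \<longleftrightarrow> d \<in> darts w \<and>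
     (face_perm rot ^^ 3) d = d \<and>
     x = vert w (face_perm rot d) \<and> y = vert w ((face_perm rot ^^ 2) d) \<and> z = vert w d \<and>
     x \<noteq> y \<and> y \<noteq> z \<and> z \<noteq> x"

definition has_typeC_trigon :: "'a list \<Rightarrow> (dart \<Rightarrow> dart) \<Rightarrow> bool" where
  "has_typeC_trigon w rot \<longleftrightarrow>
     (\<exists>d x y z. trigon_at w rot d x y z \<and>
        interlaced w x y \<and> interlaced w y z \<and> interlaced w z x)"

definition reducible :: "'a list \<Rightarrow> bool" where
  "reducible w \<longleftrightarrow> (\<exists>c \<in> set w. \<forall>d \<in> set w. \<not> interlaced w c d)"

(* inverse-half-twisted splice: p A p B  \<mapsto>  rev A @ B *)
definition splice :: "'a list \<Rightarrow> 'a \<Rightarrow> 'a list" where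
  "splice w p = (let i = hd (filter (\<lambda>k. w!k = p) [0..<length w]);
                     j = last (filter (\<lambda>k. w!k = p) [0..<length w])
                 in rev (take (j - i - 1) (drop (Suc i) w)) @ drop (Suc j) w @ take i w)"

fun reducible_within :: "nat \<Rightarrow> 'a list \<Rightarrow> bool" where
  "reducible_within 0 w = reducible w"
| "reducible_within (Suc k) w = (reducible w \<or> (\<exists>p \<in> set w. reducible_within k (splice w p)))"

definition reductivity :: "'a list \<Rightarrow> nat" where
  "reductivity w = (LEAST k. reducible_within k w)"

end

theory Submission
  imports Defs
begin


lemma pos_set_card: "count_list w c = card {q. q < length w \<and> w!q = c}"
  by (simp add: count_list_eq_length_filter length_filter_conv_card eq_commute)

lemma pos2:
  assumes "count_list w c = 2"
  shows "\<exists>i j. i < j \<and> j < length w \<and> w!i = c \<and> w!j = c \<and>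
     (\<forall>q<length w. w!q = c \<longrightarrow> q = i \<or> q = j)"
proof -
  have "card {q. q < length w \<and> w!q = c} = 2" using assms pos_set_card by metis
  then obtain i j where ij: "{q. q < length w \<and> w!q = c} = {i,j}" "i \<noteq> j"
    by (auto simp: card_2_iff)
  show ?thesis
  proof (cases "i < j")
    case True then show ?thesis using ij by (rule_tac x=i in exI, rule_tac x=j in exI) blast
  next
    case False then have "j < i" using ij by simp
    then show ?thesis using ij by (rule_tac x=j in exI, rule_tac x=i in exI) blast
  qed
qed

lemma pos_unique:
  assumes "count_list w c = 2" "i \<noteq> j" "i < length w" "j < length w" "w!i = c" "w!j = c"
    "q < length w" "w!q = c"
  shows "q = i \<or> q = j"
proof -
  have S: "card {q. q < length w \<and> w!q = c} = 2" using assms pos_set_card by metis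
  have "{i,j} \<subseteq> {q. q < length w \<and> w!q = c}" using assms by auto
  moreover have "card {i,j} = 2" using assms by simp
  ultimately have "{i,j} = {q. q < length w \<and> w!q = c}"
    using S by (intro card_subset_eq) auto
  then show ?thesis using assms by blast
qed

definition X4 :: "nat \<Rightarrow> nat \<Rightarrow> nat \<Rightarrow> nat \<Rightarrow> bool" where
  "X4 i j k l \<longleftrightarrow> (((i<k) \<noteq> (j<k)) \<noteq> ((i<l) \<noteq> (j<l)))"

lemma interlaced_sym: "interlaced w a b = interlaced w b a"
  unfolding interlaced_def by blast

lemma link2:
  assumes "count_list w c = 2" "count_list w d = 2"
    "i \<noteq> j" "i < length w" "j < length w" "w!i = c" "w!j = c"
    "k \<noteq> l" "k < length w" "l < length w" "w!k = d" "w!l = d"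
  shows "interlaced w c d \<longleftrightarrow> c \<noteq> d \<and> X4 i j k l"
proof
  assume I: "interlaced w c d"
  then have cd: "c \<noteq> d" by (simp add: interlaced_def)
  from I obtain p1 p2 p3 p4 where P: "p1 < p2" "p2 < p3" "p3 < p4" "p4 < length w"
    "(w!p1 = c \<and> w!p2 = d \<and> w!p3 = c \<and> w!p4 = d) \<or>
     (w!p1 = d \<and> w!p2 = c \<and> w!p3 = d \<and> w!p4 = c)"
    unfolding interlaced_def by blast
  have uc: "\<And>q. q < length w \<Longrightarrow> w!q = c \<Longrightarrow> q = i \<or> q = j"
    using pos_unique[OF assms(1,3,4,5,6,7)] by blast
  have ud: "\<And>q. q < length w \<Longrightarrow> w!q = d \<Longrightarrow> q = k \<or> q = l"
    using pos_unique[OF assms(2,8,9,10,11,12)] by blast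
  from P(5) show "c \<noteq> d \<and> X4 i j k l"
  proof
    assume H: "w!p1 = c \<and> w!p2 = d \<and> w!p3 = c \<and> w!p4 = d"
    have "p1 = i \<or> p1 = j" "p3 = i \<or> p3 = j" "p2 = k \<or> p2 = l" "p4 = k \<or> p4 = l"
      using uc ud H P by auto
    then show ?thesis using P(1-3) cd unfolding X4_def by auto
  next
    assume H: "w!p1 = d \<and> w!p2 = c \<and> w!p3 = d \<and> w!p4 = c"
    have "p2 = i \<or> p2 = j" "p4 = i \<or> p4 = j" "p1 = k \<or> p1 = l" "p3 = k \<or> p3 = l"
      using uc ud H P by auto
    then show ?thesis using P(1-3) cd unfolding X4_def by auto
  qed
next
  assume H: "c \<noteq> d \<and> X4 i j k l"
  have d1: "i \<noteq> k" "i \<noteq> l" "j \<noteq> k" "j \<noteq> l" using H assms by auto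
  define a1 where "a1 = min i j"
  define a2 where "a2 = max i j"
  define b1 where "b1 = min k l"
  define b2 where "b2 = max k l"
  have w: "w!a1 = c" "w!a2 = c" "w!b1 = d" "w!b2 = d" "a2 < length w" "b2 < length w"
    using assms unfolding a1_def a2_def b1_def b2_def min_def max_def by auto
  have "(a1 < b1 \<and> b1 < a2 \<and> a2 < b2) \<or> (b1 < a1 \<and> a1 < b2 \<and> b2 < a2)"
    using H d1 assms(3,8) unfolding X4_def a1_def a2_def b1_def b2_def min_def max_def
    by (cases "i < j"; cases "k < l"; auto)
  then show "interlaced w c d"
    unfolding interlaced_def using H w by fastforce
qed



definition CW :: "'a list \<Rightarrow> bool" where
  "CW w \<longleftrightarrow> (\<forall>c \<in> set w. count_list w c = 2)"

lemma filter_pos2: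
  assumes "i < j" "j < length w" "w!i = p" "w!j = p"
    "\<forall>q<length w. w!q = p \<longrightarrow> q = i \<or> q = j"
  shows "filter (\<lambda>k. w!k = p) [0..<length w] = [i,j]"
proof -
  have s: "set (filter (\<lambda>k. w!k = p) [0..<length w]) = {i,j}" using assms by auto
  have "sorted_wrt (<) (filter (\<lambda>k. w!k = p) [0..<length w])"
    by (simp add: sorted_wrt_filter)
  moreover have "sorted_wrt (<) [i,j]" using assms by simp
  ultimately show ?thesis using s
    by (metis (no_types, lifting) distinct.simps(2) distinct_singleton empty_set list.simps(15)
        sorted_distinct_set_unique sorted_wrt01 sorted_wrt_iff_nth_less strict_sorted_iff)
qed

lemma splice_eq:
  assumes "i < j" "j < length w" "w!i = p" "w!j = p"
    "\<forall>q<length w. w!q = p \<longrightarrow> q = i \<or> q = j"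
  shows "splice w p = rev (take (j - i - 1) (drop (Suc i) w)) @ drop (Suc j) w @ take i w"
  using filter_pos2[OF assms] unfolding splice_def by (simp add: Let_def)

lemma decomp:
  assumes "i < j" "j < length w"
  shows "w = take i w @ w!i # take (j - i - 1) (drop (Suc i) w) @ w!j # drop (Suc j) w"
proof -
  have "w = take i w @ drop i w" by simp
  also have "drop i w = w!i # drop (Suc i) w" using assms by (simp add: Cons_nth_drop_Suc)
  also have "drop (Suc i) w = take (j - i - 1) (drop (Suc i) w) @ drop (j - i - 1) (drop (Suc i) w)"
    by (rule append_take_drop_id[symmetric])
  also have "drop (j - i - 1) (drop (Suc i) w) = drop j w" using assms by simp
  also have "drop j w = w!j # drop (Suc j) w" using assms by (simp add: Cons_nth_drop_Suc)
  finally show ?thesis by simp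
qed



definition sgm :: "nat \<Rightarrow> nat \<Rightarrow> nat \<Rightarrow> nat \<Rightarrow> nat" where
  "sgm i j m u = (if u < i then (j-i-1)+(m-j-1)+u else if u < j then j-1-u else u-j-1+(j-i-1))"

lemma sigma_nth:
  assumes "i < j" "j < length w" "u < length w" "u \<noteq> i" "u \<noteq> j"
  shows "sgm i j (length w) u < length w - 2 \<and>
    (rev (take (j - i - 1) (drop (Suc i) w)) @ drop (Suc j) w @ take i w) ! (sgm i j (length w) u) = w ! u"
proof -
  consider "u < i" | "i < u \<and> u < j" | "j < u" using assms by linarith
  then show ?thesis
  proof cases
    case 1
    then show ?thesis using assms by (simp add: nth_append rev_nth sgm_def) arith
  next
    case 2
    define A where "A = take (j - i - 1) (drop (Suc i) w)"
    have lA: "length A = j - i - 1" using assms unfolding A_def by simp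
    have sg: "sgm i j (length w) u = j - 1 - u" using 2 unfolding sgm_def by simp
    have lt: "j - 1 - u < length A" using 2 lA by arith
    have e: "length A - Suc (j - 1 - u) = u - i - 1" using 2 lA by arith
    have "rev A ! (j - 1 - u) = A ! (u - i - 1)" using lt e by (simp add: rev_nth)
    also have "\<dots> = w ! u"
    proof -
      have "u - i - 1 < j - i - 1" using 2 by arith
      then have "A ! (u - i - 1) = drop (Suc i) w ! (u - i - 1)" unfolding A_def by simp
      also have "\<dots> = w ! (Suc i + (u - i - 1))" using assms by (simp add: nth_drop)
      also have "Suc i + (u - i - 1) = u" using 2 by arith
      finally show ?thesis .
    qed
    finally have "rev A ! (j - 1 - u) = w ! u" .
    then show ?thesis using lt sg lA assms 2 unfolding A_def[symmetric] by (simp add: nth_append)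
  next
    case 3
    then show ?thesis using assms by (simp add: nth_append rev_nth sgm_def) arith
  qed
qed

lemma sigma_less:
  assumes "i < j" "j < m" "u < m" "u \<noteq> i" "u \<noteq> j" "v < m" "v \<noteq> i" "v \<noteq> j" "u \<noteq> v"
  shows "(sgm i j m u < sgm i j m v) = ((u < v) \<noteq> (((i<u \<and> u<j) \<and> (i<v \<and> v<j)) \<noteq> ((u<i) \<noteq> (v<i))))"
  using assms unfolding sgm_def by auto

lemma sigma_inj:
  assumes "i < j" "j < m" "u < m" "u \<noteq> i" "u \<noteq> j" "v < m" "v \<noteq> i" "v \<noteq> j" "u \<noteq> v"
  shows "sgm i j m u \<noteq> sgm i j m v"
  using assms unfolding sgm_def by auto

lemma splice_setup:
  assumes "CW w" "p \<in> set w"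
  obtains i j where "i < j" "j < length w" "w!i = p" "w!j = p"
     "\<forall>q<length w. w!q = p \<longrightarrow> q = i \<or> q = j"
     "splice w p = rev (take (j - i - 1) (drop (Suc i) w)) @ drop (Suc j) w @ take i w"
     "length (splice w p) = length w - 2"
     "set (splice w p) = set w - {p}"
     "\<forall>c. c \<noteq> p \<longrightarrow> count_list (splice w p) c = count_list w c"
proof -
  have "count_list w p = 2" using assms unfolding CW_def by blast
  from pos2[OF this] obtain i j where ij: "i < j" "j < length w" "w!i = p" "w!j = p"
     "\<forall>q<length w. w!q = p \<longrightarrow> q = i \<or> q = j" by blast
  define F where "F = take i w"
  define A where "A = take (j - i - 1) (drop (Suc i) w)"
  define B where "B = drop (Suc j) w"
  have sp: "splice w p = rev A @ B @ F" unfolding A_def B_def F_def using splice_eq[OF ij] by simp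
  have dw: "w = F @ p # A @ p # B" using decomp[OF ij(1,2)] ij unfolding A_def B_def F_def by simp
  have cw: "\<And>c. count_list w c = count_list F c + count_list A c + count_list B c + (if p = c then 2 else 0)"
    by (subst dw) simp
  have cs: "\<And>c. count_list (splice w p) c = count_list F c + count_list A c + count_list B c"
    unfolding sp by simp
  have c2: "count_list w p = 2" using assms unfolding CW_def by blast
  have cp: "count_list (splice w p) p = 0" using cw[of p] cs[of p] c2 by simp
  have ceq: "\<forall>c. c \<noteq> p \<longrightarrow> count_list (splice w p) c = count_list w c" using cw cs by simp
  have "set (splice w p) = set w - {p}"
  proof
    show "set (splice w p) \<subseteq> set w - {p}"
    proof
      fix c assume "c \<in> set (splice w p)"
      then have "count_list (splice w p) c \<noteq> 0" by (simp add: count_list_0_iff)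
      moreover then have cnp: "c \<noteq> p" using cp by auto
      ultimately have "count_list w c \<noteq> 0" using ceq by metis
      then show "c \<in> set w - {p}" using cnp by (simp add: count_list_0_iff)
    qed
  next
    show "set w - {p} \<subseteq> set (splice w p)"
    proof
      fix c assume "c \<in> set w - {p}"
      then have "count_list w c \<noteq> 0" "c \<noteq> p" by (auto simp add: count_list_0_iff)
      then have "count_list (splice w p) c \<noteq> 0" using ceq by auto
      then show "c \<in> set (splice w p)" by (simp add: count_list_0_iff)
    qed
  qed
  moreover have "length (splice w p) = length w - 2"
  proof -
    have "length w = length F + length A + length B + 2" by (subst dw) simp
    then show ?thesis unfolding sp by simp
  qed
  ultimately show ?thesis using that[OF ij] ceq sp unfolding A_def B_def F_def by blast
qed

lemma splice_set: "CW w \<Longrightarrow> p \<in> set w \<Longrightarrow> set (splice w p) = set w - {p}"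
  by (rule splice_setup) auto

lemma splice_CW: assumes "CW w" "p \<in> set w" shows "CW (splice w p)"
proof (rule splice_setup[OF assms])
  fix i j assume "set (splice w p) = set w - {p}"
     "\<forall>c. c \<noteq> p \<longrightarrow> count_list (splice w p) c = count_list w c"
  then show ?thesis using assms unfolding CW_def by auto
qed

lemma ins_lemma: fixes i j u :: nat assumes "i < j" "u \<noteq> i" "u \<noteq> j" shows "((i<u) \<noteq> (j<u)) = (i < u \<and> u < j)"
proof -
  consider "u < i" | "i < u \<and> u < j" | "j < u" using assms by linarith
  then show ?thesis using assms by cases auto
qed

lemma splice_interl:
  assumes "CW w" "p \<in> set w" "a \<in> set (splice w p)" "b \<in> set (splice w p)" "a \<noteq> b"
  shows "interlaced (splice w p) a b \<longleftrightarrow> (interlaced w a b \<noteq> (interlaced w p a \<and> interlaced w p b))"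
proof -
  obtain i j where ij: "i < j" "j < length w" "w!i = p" "w!j = p"
     "\<forall>q<length w. w!q = p \<longrightarrow> q = i \<or> q = j"
     and sp: "splice w p = rev (take (j - i - 1) (drop (Suc i) w)) @ drop (Suc j) w @ take i w"
     and ls: "length (splice w p) = length w - 2"
     and ss: "set (splice w p) = set w - {p}"
    by (rule splice_setup[OF assms(1,2)])
  have CWs: "CW (splice w p)" by (rule splice_CW[OF assms(1,2)])
  have aw: "a \<in> set w" "a \<noteq> p" "b \<in> set w" "b \<noteq> p" using assms(3,4) ss by auto
  have ca: "count_list w a = 2" "count_list w b = 2" "count_list w p = 2"
    using assms(1,2) aw unfolding CW_def by auto
  have cas: "count_list (splice w p) a = 2" "count_list (splice w p) b = 2"
    using CWs assms(3,4) unfolding CW_def by auto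
  obtain u1 u2 where u: "u1 < u2" "u2 < length w" "w!u1 = a" "w!u2 = a"
    using pos2[OF ca(1)] by blast
  obtain v1 v2 where v: "v1 < v2" "v2 < length w" "v1 < length w" "w!v1 = b" "w!v2 = b"
    using pos2[OF ca(2)] by force
  have u1l: "u1 < length w" using u by simp
  have ne: "u1 \<noteq> i" "u1 \<noteq> j" "u2 \<noteq> i" "u2 \<noteq> j" "v1 \<noteq> i" "v1 \<noteq> j" "v2 \<noteq> i" "v2 \<noteq> j"
    "u1 \<noteq> v1" "u1 \<noteq> v2" "u2 \<noteq> v1" "u2 \<noteq> v2"
    using u v ij aw assms(5) by auto
  let ?s = "sgm i j (length w)"
  have su1: "?s u1 < length (splice w p)" "splice w p ! ?s u1 = a"
    using sigma_nth[OF ij(1,2) u1l ne(1,2)] u ls sp by auto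
  have su2: "?s u2 < length (splice w p)" "splice w p ! ?s u2 = a"
    using sigma_nth[OF ij(1,2) u(2) ne(3,4)] u ls sp by auto
  have sv1: "?s v1 < length (splice w p)" "splice w p ! ?s v1 = b"
    using sigma_nth[OF ij(1,2) v(3) ne(5,6)] v ls sp by auto
  have sv2: "?s v2 < length (splice w p)" "splice w p ! ?s v2 = b"
    using sigma_nth[OF ij(1,2) v(2) ne(7,8)] v ls sp by auto
  have nu: "?s u1 \<noteq> ?s u2" using sigma_inj[OF ij(1,2) u1l ne(1,2) u(2) ne(3,4)] u by simp
  have nv: "?s v1 \<noteq> ?s v2" using sigma_inj[OF ij(1,2) v(3) ne(5,6) v(2) ne(7,8)] v by simp
  have L1: "interlaced (splice w p) a b \<longleftrightarrow> X4 (?s u1) (?s u2) (?s v1) (?s v2)"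
    using link2[OF cas nu su1(1) su2(1) su1(2) su2(2) nv sv1(1) sv2(1) sv1(2) sv2(2)] assms(5) by simp
  have L2: "interlaced w a b \<longleftrightarrow> X4 u1 u2 v1 v2"
    using link2[OF ca(1,2) _ u1l u(2) u(3,4) _ v(3) v(2) v(4,5)] u v assms(5) by simp
  have L3: "interlaced w p a \<longleftrightarrow> X4 i j u1 u2"
    using link2[OF ca(3,1) _ _ ij(2) ij(3,4) _ u1l u(2) u(3,4)] u ij aw by simp
  have L4: "interlaced w p b \<longleftrightarrow> X4 i j v1 v2"
    using link2[OF ca(3,2) _ _ ij(2) ij(3,4) _ v(3) v(2) v(4,5)] v ij aw by simp
  have S1: "(?s u1 < ?s v1) = ((u1 < v1) \<noteq> (((i<u1 \<and> u1<j) \<and> (i<v1 \<and> v1<j)) \<noteq> ((u1<i) \<noteq> (v1<i))))"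
    by (rule sigma_less) (use ij u v ne in auto)
  have S2: "(?s u2 < ?s v1) = ((u2 < v1) \<noteq> (((i<u2 \<and> u2<j) \<and> (i<v1 \<and> v1<j)) \<noteq> ((u2<i) \<noteq> (v1<i))))"
    by (rule sigma_less) (use ij u v ne in auto)
  have S3: "(?s u1 < ?s v2) = ((u1 < v2) \<noteq> (((i<u1 \<and> u1<j) \<and> (i<v2 \<and> v2<j)) \<noteq> ((u1<i) \<noteq> (v2<i))))"
    by (rule sigma_less) (use ij u v ne in auto)
  have S4: "(?s u2 < ?s v2) = ((u2 < v2) \<noteq> (((i<u2 \<and> u2<j) \<and> (i<v2 \<and> v2<j)) \<noteq> ((u2<i) \<noteq> (v2<i))))"
    by (rule sigma_less) (use ij u v ne in auto)
  have I1: "((i<u1) \<noteq> (j<u1)) = (i<u1 \<and> u1<j)" "((i<u2) \<noteq> (j<u2)) = (i<u2 \<and> u2<j)"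
    "((i<v1) \<noteq> (j<v1)) = (i<v1 \<and> v1<j)" "((i<v2) \<noteq> (j<v2)) = (i<v2 \<and> v2<j)"
    using ins_lemma[OF ij(1) ne(1,2)] ins_lemma[OF ij(1) ne(3,4)]
      ins_lemma[OF ij(1) ne(5,6)] ins_lemma[OF ij(1) ne(7,8)] by auto
  show ?thesis
    unfolding L1 L2 L3 L4 X4_def S1 S2 S3 S4 I1 by argo
qed



lemma dpos_less: "d \<in> darts w \<Longrightarrow> 0 < length w \<Longrightarrow> dpos w d < length w"
  by (cases d; cases "snd d") (auto simp: darts_def)

lemma darts_at:
  assumes "d \<in> darts w" "0 < length w"
  shows "d = in_dart w (dpos w d) \<or> d = out_dart (dpos w d)"
proof (cases d)
  case (Pair e b)
  have e: "e < length w" using assms Pair by (simp add: darts_def)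
  show ?thesis
  proof (cases b)
    case True then show ?thesis using Pair by (simp add: out_dart_def)
  next
    case False
    have "(Suc e mod length w + length w - 1) mod length w = e"
    proof (cases "Suc e < length w")
      case True
      then have "Suc e mod length w = Suc e" by simp
      then have "(Suc e mod length w + length w - 1) = e + length w" by simp
      then show ?thesis using e by simp
    next
      case False
      then have "Suc e = length w" using e by simp
      then show ?thesis by simp
    qed
    then show ?thesis using Pair False by (simp add: in_dart_def)
  qed
qed

lemma rot_dpos:
  assumes "admissible_rotation w rot" "d \<in> darts w" "0 < length w"
  shows "dpos w (rot d) \<noteq> dpos w d"
proof
  assume H: "dpos w (rot d) = dpos w d"
  define p where "p = dpos w d"
  have p: "p < length w" using dpos_less assms p_def by blast
  have rd: "rot d \<in> darts w" using assms unfolding admissible_rotation_def by blast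
  have d1: "d = in_dart w p \<or> d = out_dart p" using darts_at assms p_def by blast
  have d2: "rot d = in_dart w p \<or> rot d = out_dart p" using darts_at[OF rd assms(3)] H p_def by simp
  have R: "rot (rot (in_dart w p)) = out_dart p" "rot (rot (out_dart p)) = in_dart w p"
    using assms(1) p unfolding admissible_rotation_def by auto
  have ne: "in_dart w p \<noteq> out_dart p" by (simp add: in_dart_def out_dart_def)
  from d1 d2 R ne show False by auto
qed

lemma edge_term:
  assumes "d \<in> darts w" "k < length w" "k \<noteq> dpos w d" "k \<noteq> dpos w (alpha d)"
  shows "((dpos w d < k) \<noteq> (dpos w (alpha d) < k)) = (Suc (fst d) = length w)"
proof (cases d)
  case (Pair e b)
  have e: "e < length w" using assms Pair by (simp add: darts_def)
  show ?thesis
  proof (cases "Suc e < length w")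
    case True
    then show ?thesis using assms Pair by (cases b) auto
  next
    case False
    then have "Suc e = length w" using e by simp
    then show ?thesis using assms Pair by (cases b) auto
  qed
qed

lemma interlaced_irrefl: "\<not> interlaced w a a"
  by (simp add: interlaced_def)

lemma three_step:
  assumes cw: "CW w" and abc: "a \<in> set w" "b \<in> set w" "c \<in> set w" "a \<noteq> b" "b \<noteq> c" "a \<noteq> c"
    and tri: "interlaced w a b" "interlaced w b c" "interlaced w a c"
    and v: "v \<in> set w" "v \<noteq> a" "v \<noteq> b" "v \<noteq> c"
      "\<not> interlaced w v a" "interlaced w v b" "interlaced w v c"
    and par: "\<forall>d\<in>set w. d \<noteq> a \<and> d \<noteq> b \<and> d \<noteq> c \<longrightarrow>
         ((interlaced w a d \<noteq> interlaced w b d) = interlaced w c d)"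
  shows "reducible_within 3 w"
proof -
  define w1 where "w1 = splice w v"
  define w2 where "w2 = splice w1 b"
  define w3 where "w3 = splice w2 a"
  have s1: "set w1 = set w - {v}" "CW w1" unfolding w1_def using splice_set[OF cw v(1)] splice_CW[OF cw v(1)] by auto
  have b1: "b \<in> set w1" using s1 abc v by auto
  have s2: "set w2 = set w - {v, b}" "CW w2" unfolding w2_def using splice_set[OF s1(2) b1] splice_CW[OF s1(2) b1] s1(1) by auto
  have a2: "a \<in> set w2" using s2 abc v by auto
  have s3: "set w3 = set w - {v, b, a}" unfolding w3_def using splice_set[OF s2(2) a2] s2(1) by auto
  have c3: "c \<in> set w3" using s3 abc v by auto
  have "reducible w3"
    unfolding reducible_def
  proof (rule bexI[OF _ c3], rule ballI)
    fix d assume d3: "d \<in> set w3"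
    show "\<not> interlaced w3 c d"
    proof (cases "d = c")
      case True then show ?thesis by (simp add: interlaced_irrefl)
    next
      case False
      have d: "d \<in> set w" "d \<noteq> v" "d \<noteq> b" "d \<noteq> a" "d \<noteq> c" using d3 s3 False by auto
      have cc: "c \<in> set w2" "d \<in> set w2" "c \<in> set w1" "d \<in> set w1" "a \<in> set w1"
        using s1 s2 d abc v by auto
      have cs: "c \<in> set (splice w v)" "d \<in> set (splice w v)" "a \<in> set (splice w v)" "b \<in> set (splice w v)"
        using cc b1 unfolding w1_def by auto
      have cs2: "c \<in> set (splice w1 b)" "d \<in> set (splice w1 b)" "a \<in> set (splice w1 b)"
        using cc a2 unfolding w2_def by auto
      have cs3: "c \<in> set (splice w2 a)" "d \<in> set (splice w2 a)"
        using c3 d3 unfolding w3_def by auto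
      have E3: "interlaced w3 c d = (interlaced w2 c d \<noteq> (interlaced w2 a c \<and> interlaced w2 a d))"
        unfolding w3_def by (rule splice_interl[OF s2(2) a2 cs3 d(5)[symmetric]])
      have E2a: "interlaced w2 c d = (interlaced w1 c d \<noteq> (interlaced w1 b c \<and> interlaced w1 b d))"
        unfolding w2_def by (rule splice_interl[OF s1(2) b1 cs2(1,2) d(5)[symmetric]])
      have E2b: "interlaced w2 a c = (interlaced w1 a c \<noteq> (interlaced w1 b a \<and> interlaced w1 b c))"
        unfolding w2_def by (rule splice_interl[OF s1(2) b1 cs2(3,1) abc(6)])
      have E2c: "interlaced w2 a d = (interlaced w1 a d \<noteq> (interlaced w1 b a \<and> interlaced w1 b d))"
        unfolding w2_def by (rule splice_interl[OF s1(2) b1 cs2(3,2) d(4)[symmetric]])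
      have E1a: "interlaced w1 c d = (interlaced w c d \<noteq> (interlaced w v c \<and> interlaced w v d))"
        unfolding w1_def by (rule splice_interl[OF cw v(1) cs(1,2) d(5)[symmetric]])
      have E1b: "interlaced w1 b c = (interlaced w b c \<noteq> (interlaced w v b \<and> interlaced w v c))"
        unfolding w1_def by (rule splice_interl[OF cw v(1) cs(4,1) abc(5)])
      have E1c: "interlaced w1 b d = (interlaced w b d \<noteq> (interlaced w v b \<and> interlaced w v d))"
        unfolding w1_def by (rule splice_interl[OF cw v(1) cs(4,2) d(3)[symmetric]])
      have E1d: "interlaced w1 a c = (interlaced w a c \<noteq> (interlaced w v a \<and> interlaced w v c))"
        unfolding w1_def by (rule splice_interl[OF cw v(1) cs(3,1) abc(6)])
      have E1e: "interlaced w1 b a = (interlaced w b a \<noteq> (interlaced w v b \<and> interlaced w v a))"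
        unfolding w1_def by (rule splice_interl[OF cw v(1) cs(4,3) abc(4)[symmetric]])
      have E1f: "interlaced w1 a d = (interlaced w a d \<noteq> (interlaced w v a \<and> interlaced w v d))"
        unfolding w1_def by (rule splice_interl[OF cw v(1) cs(3,2) d(4)[symmetric]])
      have ba: "interlaced w b a" using tri interlaced_sym by metis
      have pd: "(interlaced w a d \<noteq> interlaced w b d) = interlaced w c d" using par d by auto
      show ?thesis
        unfolding E3 E2a E2b E2c E1a E1b E1c E1d E1e E1f using tri v ba pd
        by (cases "interlaced w v d"; cases "interlaced w a d"; cases "interlaced w b d"; auto)
    qed
  qed
  then show ?thesis using v(1) b1 a2 unfolding w1_def w2_def w3_def
    by (auto simp: numeral_3_eq_3)
qed

lemma one_step:
  assumes cw: "CW w" and xyz: "x \<in> set w" "y \<in> set w" "z \<in> set w" "x \<noteq> y" "y \<noteq> z" "x \<noteq> z"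
    and tri: "interlaced w x y" "interlaced w y z" "interlaced w x z"
    and none: "\<forall>d\<in>set w. d \<noteq> x \<and> d \<noteq> y \<and> d \<noteq> z \<longrightarrow>
         \<not> interlaced w x d \<and> \<not> interlaced w y d \<and> \<not> interlaced w z d"
  shows "reducible_within 1 w"
proof -
  define w1 where "w1 = splice w x"
  have s1: "set w1 = set w - {x}" unfolding w1_def using splice_set[OF cw xyz(1)] by auto
  have y1: "y \<in> set w1" using s1 xyz by auto
  have "reducible w1"
    unfolding reducible_def
  proof (rule bexI[OF _ y1], rule ballI)
    fix d assume d1: "d \<in> set w1"
    show "\<not> interlaced w1 y d"
    proof (cases "d = y")
      case True then show ?thesis by (simp add: interlaced_irrefl)
    next
      case False
      have E: "interlaced w1 y d = (interlaced w y d \<noteq> (interlaced w x y \<and> interlaced w x d))"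
        unfolding w1_def by (rule splice_interl[OF cw xyz(1)]) (use y1 d1 False in \<open>auto simp: w1_def\<close>)
      show ?thesis
      proof (cases "d = z")
        case True then show ?thesis using E tri by simp
      next
        case False
        then have "\<not> interlaced w y d" "\<not> interlaced w x d" using none d1 s1 \<open>d \<noteq> y\<close> by auto
        then show ?thesis using E by simp
      qed
    qed
  qed
  then show ?thesis using xyz unfolding w1_def by auto
qed

lemma gauss_CW: "gauss_word w \<Longrightarrow> CW w"
  by (simp add: gauss_word_def CW_def)

theorem mainTheorem6:
  fixes w :: "'a list" and rot :: "dart \<Rightarrow> dart"
  assumes "spherical_curve w rot"
    and "has_typeC_trigon w rot"
  shows "reductivity w \<le> 3"
proof -
  have gw: "gauss_word w" and ar: "admissible_rotation w rot"
    using assms(1) unfolding spherical_curve_def by auto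
  have cw: "CW w" using gauss_CW gw by blast
  have m0: "0 < length w" using gw unfolding gauss_word_def by simp
  obtain d0 x y z where tr: "trigon_at w rot d0 x y z"
    and ixy: "interlaced w x y" and iyz: "interlaced w y z" and izx: "interlaced w z x"
    using assms(2) unfolding has_typeC_trigon_def by blast
  define phi where "phi = face_perm rot"
  have phi_d: "\<And>d. d \<in> darts w \<Longrightarrow> phi d \<in> darts w \<and> vert w (phi d) = vert w (alpha d) \<and> alpha d \<in> darts w"
  proof -
    fix d assume d: "d \<in> darts w"
    have ad: "alpha d \<in> darts w" using d by (cases d) (simp add: darts_def)
    then show "phi d \<in> darts w \<and> vert w (phi d) = vert w (alpha d) \<and> alpha d \<in> darts w"
      using ar unfolding admissible_rotation_def phi_def face_perm_def by auto
  qed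
  define d1 where "d1 = phi d0"
  define d2 where "d2 = phi d1"
  have D0: "d0 \<in> darts w" using tr unfolding trigon_at_def by blast
  have D1: "d1 \<in> darts w" using phi_d D0 d1_def by blast
  have D2: "d2 \<in> darts w" using phi_d D1 d2_def by blast
  have cyc: "phi d2 = d0" using tr unfolding trigon_at_def phi_def d2_def d1_def
    by (simp add: numeral_3_eq_3)
  have xv: "x = vert w d1" and yv: "y = vert w d2" and zv: "z = vert w d0"
    and dxyz: "x \<noteq> y" "y \<noteq> z" "z \<noteq> x"
    using tr unfolding trigon_at_def phi_def d2_def d1_def by (auto simp: numeral_2_eq_2)
  have rp: "\<And>d. d \<in> darts w \<Longrightarrow> dpos w (phi d) \<noteq> dpos w (alpha d)"
    unfolding phi_def face_perm_def using rot_dpos[OF ar _ m0] phi_d by auto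
  define xa where "xa = dpos w (alpha d0)"
  define xb where "xb = dpos w d1"
  define ya where "ya = dpos w (alpha d1)"
  define yb where "yb = dpos w d2"
  define za where "za = dpos w (alpha d2)"
  define zb where "zb = dpos w d0"
  have A0: "alpha d0 \<in> darts w" "alpha d1 \<in> darts w" "alpha d2 \<in> darts w"
    using phi_d D0 D1 D2 by auto
  have lt: "xa < length w" "xb < length w" "ya < length w" "yb < length w" "za < length w" "zb < length w"
    unfolding xa_def xb_def ya_def yb_def za_def zb_def by (simp_all add: dpos_less[OF A0(1) m0] dpos_less[OF D1 m0] dpos_less[OF A0(2) m0]
      dpos_less[OF D2 m0] dpos_less[OF A0(3) m0] dpos_less[OF D0 m0])
  have nth: "w!xa = x" "w!xb = x" "w!ya = y" "w!yb = y" "w!za = z" "w!zb = z"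
    unfolding xa_def xb_def ya_def yb_def za_def zb_def xv yv zv
    using phi_d[OF D0] phi_d[OF D1] phi_d[OF D2] cyc d1_def d2_def
    by (auto simp: vert_def)
  have nab: "xa \<noteq> xb" "ya \<noteq> yb" "za \<noteq> zb"
    unfolding xa_def xb_def ya_def yb_def za_def zb_def
    using rp[OF D0] rp[OF D1] rp[OF D2] cyc d1_def d2_def by auto
  have inw: "x \<in> set w" "y \<in> set w" "z \<in> set w" using lt nth by (metis nth_mem)+
  have cnt: "count_list w x = 2" "count_list w y = 2" "count_list w z = 2"
    using cw inw unfolding CW_def by auto
  have par: "\<forall>d\<in>set w. d \<noteq> x \<and> d \<noteq> y \<and> d \<noteq> z \<longrightarrow>
         ((interlaced w x d \<noteq> interlaced w y d) = interlaced w z d)"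
  proof (intro ballI impI)
    fix d assume d: "d \<in> set w" "d \<noteq> x \<and> d \<noteq> y \<and> d \<noteq> z"
    have cd: "count_list w d = 2" using cw d unfolding CW_def by auto
    obtain k l where kl: "k < l" "l < length w" "w!k = d" "w!l = d" using pos2[OF cd] by blast
    have kl': "k \<noteq> l" "k < length w" using kl by auto
    have Lx: "interlaced w x d = X4 xa xb k l"
      using link2[OF cnt(1) cd nab(1) lt(1,2) nth(1,2) kl'(1) kl'(2) kl(2,3,4)] d by auto
    have Ly: "interlaced w y d = X4 ya yb k l"
      using link2[OF cnt(2) cd nab(2) lt(3,4) nth(3,4) kl'(1) kl'(2) kl(2,3,4)] d by auto
    have Lz: "interlaced w z d = X4 za zb k l"
      using link2[OF cnt(3) cd nab(3) lt(5,6) nth(5,6) kl'(1) kl'(2) kl(2,3,4)] d by auto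
    have nk: "k \<noteq> xa" "k \<noteq> xb" "k \<noteq> ya" "k \<noteq> yb" "k \<noteq> za" "k \<noteq> zb"
      "l \<noteq> xa" "l \<noteq> xb" "l \<noteq> ya" "l \<noteq> yb" "l \<noteq> za" "l \<noteq> zb"
      using nth kl d by auto
    have e0k: "((zb < k) \<noteq> (xa < k)) = (Suc (fst d0) = length w)"
      using edge_term[OF D0 kl'(2)] nk unfolding xa_def zb_def by auto
    have e0l: "((zb < l) \<noteq> (xa < l)) = (Suc (fst d0) = length w)"
      using edge_term[OF D0 kl(2)] nk unfolding xa_def zb_def by auto
    have e1k: "((xb < k) \<noteq> (ya < k)) = (Suc (fst d1) = length w)"
      using edge_term[OF D1 kl'(2)] nk unfolding xb_def ya_def by auto
    have e1l: "((xb < l) \<noteq> (ya < l)) = (Suc (fst d1) = length w)"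
      using edge_term[OF D1 kl(2)] nk unfolding xb_def ya_def by auto
    have e2k: "((yb < k) \<noteq> (za < k)) = (Suc (fst d2) = length w)"
      using edge_term[OF D2 kl'(2)] nk unfolding yb_def za_def by auto
    have e2l: "((yb < l) \<noteq> (za < l)) = (Suc (fst d2) = length w)"
      using edge_term[OF D2 kl(2)] nk unfolding yb_def za_def by auto
    show "(interlaced w x d \<noteq> interlaced w y d) = interlaced w z d"
      unfolding Lx Ly Lz X4_def using e0k e0l e1k e1l e2k e2l by argo
  qed
  have ixz: "interlaced w x z" using izx interlaced_sym by metis
  have "reducible_within 3 w \<or> reducible_within 1 w"
  proof (cases "\<exists>v\<in>set w. v \<noteq> x \<and> v \<noteq> y \<and> v \<noteq> z \<and>
                 (interlaced w x v \<or> interlaced w y v \<or> interlaced w z v)")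
    case True
    then obtain v where v: "v \<in> set w" "v \<noteq> x" "v \<noteq> y" "v \<noteq> z"
      "interlaced w x v \<or> interlaced w y v \<or> interlaced w z v" by blast
    have pv: "(interlaced w x v \<noteq> interlaced w y v) = interlaced w z v" using par v by auto
    have sv: "\<And>q. interlaced w q v = interlaced w v q" using interlaced_sym by metis
    consider "\<not> interlaced w v x" "interlaced w v y" "interlaced w v z"
      | "\<not> interlaced w v y" "interlaced w v x" "interlaced w v z"
      | "\<not> interlaced w v z" "interlaced w v x" "interlaced w v y"
      using v(5) pv unfolding sv by auto
    then show ?thesis
    proof cases
      case 1
      have "reducible_within 3 w"
        by (rule three_step[OF cw inw(1,2,3) dxyz(1,2) dxyz(3)[symmetric] ixy iyz ixz v(1-4) 1])
           (use par in auto)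
      then show ?thesis by blast
    next
      case 2
      have iyx: "interlaced w y x" using ixy interlaced_sym by metis
      have "reducible_within 3 w"
        by (rule three_step[OF cw inw(2,1,3) dxyz(1)[symmetric] dxyz(3)[symmetric] dxyz(2) iyx ixz iyz v(1) v(3) v(2) v(4) 2])
           (use par in auto)
      then show ?thesis by blast
    next
      case 3
      have izy: "interlaced w z y" using iyz interlaced_sym by metis
      have "reducible_within 3 w"
        by (rule three_step[OF cw inw(3,1,2) dxyz(3) dxyz(1) dxyz(2)[symmetric] izx ixy izy v(1) v(4) v(2) v(3) 3])
           (use par in auto)
      then show ?thesis by blast
    qed
  next
    case False
    have "reducible_within 1 w"
      by (rule one_step[OF cw inw dxyz(1,2) dxyz(3)[symmetric] ixy iyz ixz]) (use False in auto)
    then show ?thesis by blast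
  qed
  then show ?thesis
    unfolding reductivity_def by (metis Least_le le_trans one_le_numeral)
qed

end
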